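(* Let $N_r,N_t,L$ be positive integers with $L\le\min\{N_r,N_t\}$, and let $\mathbf{H}\in\mathbb{C}^{N_r\times N_t}$, $\mathbf{H}\neq\mathbf{0}$, be a channel matrix of the form $\mathbf{H} = \sqrt{\tfrac{N_r N_t}{L}}\sum_{l=1}^{L} h_l\, \mathbf{a}_r(\theta_{r,l})\, \mathbf{a}_t(\theta_{t,l})^H$, with $\mathbf{H}=\mathbf{U}\boldsymbol{\Sigma}\mathbf{V}^H$ where $\mathbf{U}\in\mathbb{C}^{N_r\times L}$ and $\mathbf{V}\in\mathbb{C}^{N_t\times L}$ consist of the $L$ dominant left and right singular vectors of $\mathbf{H}$ and $\boldsymbol{\Sigma}\in\mathbb{R}^{L\times L}$ is diagonal with the $L$ largest singular values. Let $\widehat{\mathbf{U}}\in\mathbb{C}^{N_r\times L}$ and $\widehat{\mathbf{V}}\in\mathbb{C}^{N_t\times L}$ be the estimated column and row subspace matrices (each with orthonormal columns) produced by the two-stage procedure: $\widehat{\mathbf{U}}$ is the matrix of $L$ dominant left singular vectors of a noisy observation $\mathbf{Y}_S$ of the first $m$ columns of $\mathbf{H}$, and $\widehat{\mathbf{V}}$ is the matrix of $L$ dominant right singular vectors of the observation matrix $\widehat{\mathbf{Q}}$ of $\mathbf{H}$ taken through the combiner. Suppose the combiner and precoder equal these matrices exactly: $\widehat{\mathbf{W}}=\widehat{\mathbf{U}}$ and $\widehat{\mathbf{F}}=\widehat{\mathbf{V}}$. Then $$\eta(\widehat{\mathbf{W}},\widehat{\mathbf{F}}) := \frac{\|\widehat{\mathbf{W}}^H\mathbf{H}\widehat{\mathbf{F}}\|_F^2}{\operatorname{tr}(\mathbf{H}^H\mathbf{H})}\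 \ge\ \sigma_L^2(\widehat{\mathbf{U}}^H\mathbf{U})\,\sigma_L^2(\widehat{\mathbf{V}}^H\mathbf{V}).$$
   Context: $\mathbf{a}_r(\theta) = \frac{1}{\sqrt{N_r}}[1, e^{-j\pi\sin\theta}, \dots, e^{-j\pi (N_r-1)\sin\theta}]^T$, $\mathbf{a}_t(\theta) = \frac{1}{\sqrt{N_t}}[1, e^{-j\pi\sin\theta}, \dots, e^{-j\pi (N_t-1)\sin\theta}]^T$, $h_l\in\mathbb{C}$, $\theta_{r,l},\theta_{t,l}\in[-\pi/2,\pi/2)$; such $\mathbf{H}$ has rank at most $L$. $\sigma_L(\mathbf{X})$ denotes the $L$-th largest singular value of $\mathbf{X}$. *)

theory Defs
  imports "Jordan_Normal_Form.Schur_Decomposition" "Jordan_Normal_Form.Char_Poly"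
begin

text \<open>Normalised ULA steering vector a(theta) of length N (entries indexed 0..N-1).\<close>
definition steer :: "nat \<Rightarrow> real \<Rightarrow> complex vec" where
  "steer N \<theta> = vec N (\<lambda>k. exp (- \<i> * of_real (pi * real k * sin \<theta>)) / of_real (sqrt (real N)))"

definition channel :: "nat \<Rightarrow> nat \<Rightarrow> nat \<Rightarrow> (nat \<Rightarrow> complex) \<Rightarrow> (nat \<Rightarrow> real) \<Rightarrow> (nat \<Rightarrow> real) \<Rightarrow> complex mat" where
  "channel Nr Nt L h \<theta>r \<theta>t = mat Nr Nt (\<lambda>(i,k).
     of_real (sqrt (real Nr * real Nt / real L)) *
     (\<Sum>l<L. h l * (steer Nr (\<theta>r l) $ i) * cnj (steer Nt (\<theta>t l) $ k)))"

text \<open>Singular values of A (descending, with multiplicity, length = number of columns of A):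
  the nonnegative square roots of the eigenvalues of A^H A (roots of its characteristic polynomial).\<close>
definition sing_vals :: "complex mat \<Rightarrow> real list" where
  "sing_vals A = (THE s. length s = dim_col A \<and> sorted_wrt (\<ge>) s \<and> (\<forall>x\<in>set s. x \<ge> 0) \<and>
      char_poly (mat_adjoint A * A) = (\<Prod>x\<leftarrow>s. [:- complex_of_real (x\<^sup>2), 1:]))"

text \<open>sigma_k(A): the k-th largest singular value (k >= 1).\<close>
definition sigma :: "nat \<Rightarrow> complex mat \<Rightarrow> real" where
  "sigma k A = sing_vals A ! (k - 1)"

definition unitary :: "nat \<Rightarrow> complex mat \<Rightarrow> bool" where
  "unitary n P \<longleftrightarrow> P \<in> carrier_mat n n \<and> mat_adjoint P * P = 1\<^sub>m n"

definition sv_diag :: "complex mat \<Rightarrow> complex mat" where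
  "sv_diag A = mat (dim_row A) (dim_col A)
     (\<lambda>(i,j). if i = j then complex_of_real (sing_vals A ! i) else 0)"

definition first_cols :: "nat \<Rightarrow> complex mat \<Rightarrow> complex mat" where
  "first_cols L P = mat (dim_row P) L (\<lambda>(i,j). P $$ (i,j))"

definition dominant_left_sv :: "nat \<Rightarrow> complex mat \<Rightarrow> complex mat \<Rightarrow> bool" where
  "dominant_left_sv L Y Uh \<longleftrightarrow> (\<exists>P Q. unitary (dim_row Y) P \<and> unitary (dim_col Y) Q \<and>
      Y = P * sv_diag Y * mat_adjoint Q \<and> Uh = first_cols L P)"

definition dominant_right_sv :: "nat \<Rightarrow> complex mat \<Rightarrow> complex mat \<Rightarrow> bool" where
  "dominant_right_sv L Y Vh \<longleftrightarrow> (\<exists>P Q. unitary (dim_row Y) P \<and> unitary (dim_col Y) Q \<and>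
      Y = P * sv_diag Y * mat_adjoint Q \<and> Vh = first_cols L Q)"

definition mtrace :: "complex mat \<Rightarrow> complex" where
  "mtrace A = (\<Sum>i<dim_row A. A $$ (i,i))"

definition fro_sq :: "complex mat \<Rightarrow> real" where
  "fro_sq A = (\<Sum>i<dim_row A. \<Sum>j<dim_col A. (cmod (A $$ (i,j)))\<^sup>2)"

text \<open>eta(W,F) = ||W^H H F||_F^2 / tr(H^H H)  (the trace is real; we take its real part).\<close>
definition eta :: "complex mat \<Rightarrow> complex mat \<Rightarrow> complex mat \<Rightarrow> real" where
  "eta H W F = fro_sq (mat_adjoint W * H * F) / Re (mtrace (mat_adjoint H * H))"

end

theory Submission
  imports Defs
begin

lemma cip: "dim_vec y = dim_vec x \<Longrightarrow> x \<bullet>c y = (\<Sum>i<dim_vec x. x$i * cnj (y$i))"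
  unfolding scalar_prod_def conjugate_vec_def by (auto simp: atLeast0LessThan intro!: sum.cong)

lemma adj_carrier[simp]: "dim_row (mat_adjoint A) = dim_col A" "dim_col (mat_adjoint A) = dim_row A"
  unfolding mat_adjoint_def by (auto simp: mat_of_rows_def)

lemma adj_carrier_mat: "A \<in> carrier_mat n m \<Longrightarrow> mat_adjoint A \<in> carrier_mat m n"
  by (metis adj_carrier carrier_matD carrier_matI)

lemma adj_index[simp]: "i < dim_col A \<Longrightarrow> j < dim_row A \<Longrightarrow> mat_adjoint A $$ (i,j) = cnj (A $$ (j,i))"
  unfolding mat_adjoint_def by (auto simp: mat_of_rows_def conjugate_vec_def)

lemma adj_adj[simp]: "mat_adjoint (mat_adjoint (A::complex mat)) = A"
  by (rule eq_matI, auto)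

lemma adj_mult: assumes "A \<in> carrier_mat n k" "B \<in> carrier_mat k m"
  shows "mat_adjoint (A * B) = mat_adjoint B * mat_adjoint (A::complex mat)"
  using assms by (intro eq_matI) (auto simp: scalar_prod_def cnj_sum mult.commute intro!: sum.cong)

definition nsq :: "complex vec \<Rightarrow> real" where
  "nsq x = (\<Sum>i<dim_vec x. (cmod (x$i))\<^sup>2)"

lemma cip_self: "x \<bullet>c x = complex_of_real (nsq x)"
  by (simp only: cip[OF refl] nsq_def of_real_sum complex_norm_square)

lemma nsq_nonneg: "0 \<le> nsq x" unfolding nsq_def by (auto intro: sum_nonneg)

lemma nsq_pos: assumes "x \<in> carrier_vec n" "x \<noteq> 0\<^sub>v n" shows "0 < nsq x"
proof -
  have "\<exists>i<n. x $ i \<noteq> 0"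
  proof (rule ccontr)
    assume "\<not> (\<exists>i<n. x $ i \<noteq> 0)"
    then have "x = 0\<^sub>v n" using assms(1) by (intro eq_vecI) auto
    with assms(2) show False by simp
  qed
  then obtain i where i: "i < n" "x $ i \<noteq> 0" by blast
  have "(cmod (x$i))\<^sup>2 \<le> nsq x" unfolding nsq_def
    using i assms(1) by (intro member_le_sum) auto
  moreover have "0 < (cmod (x$i))\<^sup>2" using i by auto
  ultimately show ?thesis by linarith
qed

lemma cip_cnj: assumes "dim_vec y = dim_vec x" shows "x \<bullet>c y = cnj (y \<bullet>c x)"
proof -
  have 1: "x \<bullet>c y = (\<Sum>i<dim_vec x. x$i * cnj (y$i))" using assms by (rule cip)
  have 2: "y \<bullet>c x = (\<Sum>i<dim_vec x. y$i * cnj (x$i))" using cip[of x y] assms by simp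
  show ?thesis unfolding 1 2 cnj_sum by (simp add: mult.commute)
qed

lemma cip_adj: fixes A :: "complex mat" assumes A: "A \<in> carrier_mat n m" and z: "z \<in> carrier_vec n" and y: "y \<in> carrier_vec m"
  shows "(mat_adjoint A *\<^sub>v z) \<bullet>c y = z \<bullet>c (A *\<^sub>v y)"
proof -
  have "(mat_adjoint A *\<^sub>v z) \<bullet>c y = (\<Sum>i<m. (\<Sum>j<n. cnj (A $$ (j,i)) * z $ j) * cnj (y $ i))"
    using assms by (subst cip) (auto simp: scalar_prod_def atLeast0LessThan intro!: sum.cong)
  also have "\<dots> = (\<Sum>i<m. \<Sum>j<n. z $ j * cnj (A $$ (j,i) * y $ i))"
    by (simp add: sum_distrib_right sum_distrib_left mult_ac)
  also have "\<dots> = (\<Sum>j<n. \<Sum>i<m. z $ j * cnj (A $$ (j,i) * y $ i))"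
    by (rule sum.swap)
  also have "\<dots> = z \<bullet>c (A *\<^sub>v y)"
    using assms by (subst cip) (auto simp: scalar_prod_def atLeast0LessThan cnj_sum sum_distrib_left intro!: sum.cong)
  finally show ?thesis .
qed

lemma cip_add2: "x \<in> carrier_vec n \<Longrightarrow> y \<in> carrier_vec n \<Longrightarrow> z \<in> carrier_vec n \<Longrightarrow> x \<bullet>c (y + z) = x \<bullet>c y + x \<bullet>c z"
  by (simp add: conjugate_add_vec scalar_prod_add_distrib[OF _ carrier_vec_conjugate carrier_vec_conjugate])

lemma cip_add1: assumes x: "x \<in> carrier_vec n" and y: "y \<in> carrier_vec n" and z: "z \<in> carrier_vec n"
  shows "(y + z) \<bullet>c x = y \<bullet>c x + z \<bullet>c x"
  using add_scalar_prod_distrib[OF y z carrier_vec_conjugate[OF x]] by simp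

lemma cip_smult2: "x \<in> carrier_vec n \<Longrightarrow> y \<in> carrier_vec n \<Longrightarrow> x \<bullet>c (a \<cdot>\<^sub>v y) = cnj a * (x \<bullet>c y)"
  by (simp add: cip sum_distrib_left algebra_simps)

lemma cip_smult1: "x \<in> carrier_vec n \<Longrightarrow> y \<in> carrier_vec n \<Longrightarrow> (a \<cdot>\<^sub>v y) \<bullet>c x = a * (y \<bullet>c x)"
  by (simp add: cip sum_distrib_left algebra_simps)

lemma cip_zero2: "x \<in> carrier_vec n \<Longrightarrow> x \<bullet>c 0\<^sub>v n = 0"
  by (simp add: cip)

lemma unit_complete:
  fixes u :: "complex vec"
  assumes u: "u \<in> carrier_vec n" and uu: "u \<bullet>c u = 1"
  shows "\<exists>W \<in> carrier_mat n n. mat_adjoint W * W = 1\<^sub>m n \<and> col W 0 = u"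
proof -
  have u0: "u \<noteq> 0\<^sub>v n" using uu u by auto
  have n0: "n > 0" using u u0 by (cases n) auto
  interpret cof_vec_space n "TYPE(complex)" .
  define b where "b = basis_completion u"
  note bc = basis_completion[OF u u0, folded b_def]
  define ws where "ws = gram_schmidt n b"
  note gs = gram_schmidt_result[OF bc(2) bc(4) bc(5) ws_def]
  have lenws: "length ws = n" using gs bc by simp
  obtain b' where bb: "b = u # b'" using bc(6,7) n0 by (cases b) auto
  have hdws: "hd ws = u" unfolding ws_def bb using u by simp
  have ws0: "ws ! 0 = u" using hdws lenws n0 by (cases ws) auto
  have wsc: "\<And>i. i < n \<Longrightarrow> ws ! i \<in> carrier_vec n" using gs(3) lenws by auto
  have wsii: "\<And>i. i < n \<Longrightarrow> ws ! i \<bullet>c ws ! i \<noteq> 0" using gs(2) lenws by (auto simp: corthogonal_def)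
  have wsij: "\<And>i j. i < n \<Longrightarrow> j < n \<Longrightarrow> i \<noteq> j \<Longrightarrow> ws ! i \<bullet>c ws ! j = 0" using gs(2) lenws by (auto simp: corthogonal_def)
  define nz where "nz w = complex_of_real (1 / sqrt (nsq w))" for w
  define ws' where "ws' = map (\<lambda>w. nz w \<cdot>\<^sub>v w) ws"
  have len': "length ws' = n" using lenws by (simp add: ws'_def)
  have ws'i: "\<And>i. i < n \<Longrightarrow> ws' ! i = nz (ws ! i) \<cdot>\<^sub>v ws ! i" using lenws by (simp add: ws'_def)
  have ws'c: "\<And>i. i < n \<Longrightarrow> ws' ! i \<in> carrier_vec n" using ws'i wsc by simp
  define W where "W = mat_of_cols n ws'"
  have W: "W \<in> carrier_mat n n" using len' mat_of_cols_carrier(1)[of n ws'] by (simp add: W_def)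
  have colW: "\<And>j. j < n \<Longrightarrow> col W j = ws' ! j" unfolding W_def using len' ws'c by (simp add: col_mat_of_cols)
  have nzu: "nz u = 1" using uu cip_self[of u] by (simp add: nz_def)
  have c0: "col W 0 = u" using colW[OF n0] ws'i[OF n0] ws0 nzu by simp
  have ip: "ws' ! j \<bullet>c ws' ! i = (if i = j then 1 else 0)" if i: "i < n" and j: "j < n" for i j
  proof -
    have "ws' ! j \<bullet>c ws' ! i = nz (ws ! j) * cnj (nz (ws ! i)) * (ws ! j \<bullet>c ws ! i)"
      using ws'i[OF i] ws'i[OF j] wsc[OF i] wsc[OF j]
      by (simp add: cip_smult1[of _ n] cip_smult2[of _ n])
    also have "\<dots> = (if i = j then 1 else 0)"
    proof (cases "i = j")
      case True
      have pos: "0 < nsq (ws ! i)" using wsii[OF i] cip_self[of "ws ! i"] nsq_nonneg[of "ws ! i"]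
        by (cases "nsq (ws ! i) = 0") auto
      have "nz (ws ! j) * cnj (nz (ws ! i)) * (ws ! j \<bullet>c ws ! i)
         = complex_of_real ((1 / sqrt (nsq (ws ! i))) * (1 / sqrt (nsq (ws ! i))) * nsq (ws ! i))"
        unfolding True nz_def cip_self complex_cnj_complex_of_real of_real_mult by (rule refl)
      also have "(1 / sqrt (nsq (ws ! i))) * (1 / sqrt (nsq (ws ! i))) * nsq (ws ! i) = 1"
        using pos by (simp add: field_simps)
      finally show ?thesis using True by simp
    next
      case False then show ?thesis using wsij[OF j i] by simp
    qed
    finally show ?thesis .
  qed
  have "mat_adjoint W * W = 1\<^sub>m n"
  proof (rule eq_matI)
    fix i j assume i: "i < dim_row (1\<^sub>m n :: complex mat)" and j: "j < dim_col (1\<^sub>m n :: complex mat)"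
    then have i: "i < n" and j: "j < n" by auto
    have "(mat_adjoint W * W) $$ (i, j) = (\<Sum>k<n. cnj (W $$ (k,i)) * W $$ (k,j))"
      using W i j by (auto simp add: scalar_prod_def atLeast0LessThan intro!: sum.cong)
    also have "\<dots> = col W j \<bullet>c col W i"
      using W i j by (subst cip) (auto simp: mult.commute intro!: sum.cong)
    also have "\<dots> = (1\<^sub>m n) $$ (i, j)" using colW i j ip by simp
    finally show "(mat_adjoint W * W) $$ (i, j) = (1\<^sub>m n) $$ (i, j)" .
  qed (use W in auto)
  then show ?thesis using W c0 by blast
qed

lemma mv_index: "A \<in> carrier_mat n m \<Longrightarrow> v \<in> carrier_vec m \<Longrightarrow> i < n \<Longrightarrow> (A *\<^sub>v v) $ i = (\<Sum>j<m. A $$ (i,j) * v $ j)"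
  by (simp add: scalar_prod_def atLeast0LessThan)

lemma deflate:
  fixes W :: "complex mat"
  assumes W: "W \<in> carrier_mat (Suc m) (Suc m)" and WW: "mat_adjoint W * W = 1\<^sub>m (Suc m)"
  and u: "col W 0 = u"
  defines "B \<equiv> mat (Suc m) m (\<lambda>(i,j). W $$ (i, Suc j))"
  shows "B \<in> carrier_mat (Suc m) m" "mat_adjoint B * B = 1\<^sub>m m" "mat_adjoint B *\<^sub>v u = 0\<^sub>v m"
    "\<And>z. z \<in> carrier_vec (Suc m) \<Longrightarrow> z = (z \<bullet>c u) \<cdot>\<^sub>v u + B *\<^sub>v (mat_adjoint B *\<^sub>v z)"
proof -
  show B: "B \<in> carrier_mat (Suc m) m" by (simp add: B_def)
  have uc: "u \<in> carrier_vec (Suc m)" unfolding u[symmetric] using W col_dim[of W 0] by simp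
  have ui: "\<And>k. k < Suc m \<Longrightarrow> u $ k = W $$ (k, 0)" using u W by auto
  have WWi: "(\<Sum>k<Suc m. cnj (W $$ (k,i)) * W $$ (k,j)) = (if i = j then 1 else 0)"
    if "i < Suc m" "j < Suc m" for i j
  proof -
    have "(mat_adjoint W * W) $$ (i,j) = (\<Sum>k<Suc m. cnj (W $$ (k,i)) * W $$ (k,j))"
      using W that by (auto simp add: scalar_prod_def atLeast0LessThan intro!: sum.cong)
    then show ?thesis using WW that by simp
  qed
  show "mat_adjoint B * B = 1\<^sub>m m"
  proof (rule eq_matI)
    fix i j assume "i < dim_row (1\<^sub>m m :: complex mat)" "j < dim_col (1\<^sub>m m :: complex mat)"
    then have i: "i < m" and j: "j < m" by auto
    have "(mat_adjoint B * B) $$ (i,j) = (\<Sum>k<Suc m. cnj (W $$ (k,Suc i)) * W $$ (k,Suc j))"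
      using B i j by (auto simp add: scalar_prod_def atLeast0LessThan B_def intro!: sum.cong)
    then show "(mat_adjoint B * B) $$ (i,j) = 1\<^sub>m m $$ (i,j)" using WWi[of "Suc i" "Suc j"] i j by simp
  qed (use B in auto)
  show "mat_adjoint B *\<^sub>v u = 0\<^sub>v m"
  proof (rule eq_vecI)
    fix i assume "i < dim_vec (0\<^sub>v m :: complex vec)"
    then have i: "i < m" by simp
    have "(mat_adjoint B *\<^sub>v u) $ i = (\<Sum>k<Suc m. cnj (W $$ (k,Suc i)) * W $$ (k,0))"
      using B i uc ui by (auto simp add: scalar_prod_def atLeast0LessThan B_def intro!: sum.cong)
    then show "(mat_adjoint B *\<^sub>v u) $ i = 0\<^sub>v m $ i" using WWi[of "Suc i" 0] i by simp
  qed (use B in auto)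
  fix z :: "complex vec" assume z: "z \<in> carrier_vec (Suc m)"
  have WW': "W * mat_adjoint W = 1\<^sub>m (Suc m)"
    by (rule mat_mult_left_right_inverse[OF adj_carrier_mat[OF W] W WW])
  have "z = (W * mat_adjoint W) *\<^sub>v z" using WW' z by simp
  also have "\<dots> = W *\<^sub>v (mat_adjoint W *\<^sub>v z)" using W z adj_carrier_mat[OF W] by simp
  also have "\<dots> = (z \<bullet>c u) \<cdot>\<^sub>v u + B *\<^sub>v (mat_adjoint B *\<^sub>v z)"
  proof (rule eq_vecI)
    fix i assume "i < dim_vec ((z \<bullet>c u) \<cdot>\<^sub>v u + B *\<^sub>v (mat_adjoint B *\<^sub>v z))"
    then have i: "i < Suc m" using uc by (simp add: B_def)
    define w where "w = mat_adjoint W *\<^sub>v z"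
    have wc: "w \<in> carrier_vec (Suc m)" using adj_carrier_mat[OF W] z by (simp add: w_def)
    have wj: "w $ j = (\<Sum>k<Suc m. cnj (W $$ (k,j)) * z $ k)" if "j < Suc m" for j
      using W z that by (auto simp add: w_def scalar_prod_def atLeast0LessThan intro!: sum.cong)
    have "(W *\<^sub>v w) $ i = (\<Sum>j<Suc m. W $$ (i,j) * w $ j)" by (rule mv_index[OF W wc i])
    also have "\<dots> = W $$ (i,0) * w $ 0 + (\<Sum>j<m. W $$ (i,Suc j) * w $ Suc j)"
      by (rule sum.lessThan_Suc_shift)
    also have "W $$ (i,0) * w $ 0 = ((z \<bullet>c u) \<cdot>\<^sub>v u) $ i"
      using i uc z ui wj[of 0] by (simp add: cip sum_distrib_left mult_ac)
    also have "(\<Sum>j<m. W $$ (i,Suc j) * w $ Suc j) = (B *\<^sub>v (mat_adjoint B *\<^sub>v z)) $ i"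
    proof -
      have bz: "mat_adjoint B *\<^sub>v z \<in> carrier_vec m" using B z adj_carrier_mat[OF B] by simp
      have "(B *\<^sub>v (mat_adjoint B *\<^sub>v z)) $ i = (\<Sum>j<m. B $$ (i,j) * (mat_adjoint B *\<^sub>v z) $ j)"
        by (rule mv_index[OF B bz i])
      also have "\<dots> = (\<Sum>j<m. W $$ (i,Suc j) * w $ Suc j)"
      proof (rule sum.cong[OF refl])
        fix j assume j: "j \<in> {..<m}"
        have "(mat_adjoint B *\<^sub>v z) $ j = (\<Sum>k<Suc m. mat_adjoint B $$ (j,k) * z $ k)"
          using j by (intro mv_index[OF adj_carrier_mat[OF B] z]) auto
        also have "\<dots> = w $ Suc j" using wj[of "Suc j"] j by (auto simp: B_def intro!: sum.cong)
        finally show "B $$ (i,j) * (mat_adjoint B *\<^sub>v z) $ j = W $$ (i,Suc j) * w $ Suc j"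
          using i j by (simp add: B_def)
      qed
      finally show ?thesis by simp
    qed
    finally show "(W *\<^sub>v (mat_adjoint W *\<^sub>v z)) $ i = ((z \<bullet>c u) \<cdot>\<^sub>v u + B *\<^sub>v (mat_adjoint B *\<^sub>v z)) $ i"
      unfolding w_def[symmetric] using i uc B z by simp
  qed (use W B uc in auto)
  finally show "z = (z \<bullet>c u) \<cdot>\<^sub>v u + B *\<^sub>v (mat_adjoint B *\<^sub>v z)" .
qed

lemma herm_sw: fixes M :: "complex mat"
  assumes M: "M \<in> carrier_mat n n" and h: "mat_adjoint M = M" and z: "z \<in> carrier_vec n" and y: "y \<in> carrier_vec n"
  shows "(M *\<^sub>v z) \<bullet>c y = z \<bullet>c (M *\<^sub>v y)"
  using cip_adj[OF M z y] h by simp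

lemma rayleigh:
  fixes M :: "complex mat"
  assumes "M \<in> carrier_mat n n" "mat_adjoint M = M"
  and "\<And>e v. v \<in> carrier_vec n \<Longrightarrow> v \<noteq> 0\<^sub>v n \<Longrightarrow> M *\<^sub>v v = e \<cdot>\<^sub>v v \<Longrightarrow> c \<le> Re e"
  and "x \<in> carrier_vec n"
  shows "c * nsq x \<le> Re ((M *\<^sub>v x) \<bullet>c x)"
  using assms
proof (induction n arbitrary: M x)
  case 0
  then show ?case by (simp add: nsq_def cip)
next
  case (Suc m)
  note M = Suc.prems(1) and herm = Suc.prems(2) and ev = Suc.prems(3) and x = Suc.prems(4)
  obtain es where cp: "char_poly M = (\<Prod>a\<leftarrow>es. [:- a, 1:])" and les: "length es = Suc m"
    using char_poly_factorized[OF M] by blast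
  then obtain e es' where ees: "es = e # es'" by (cases es) auto
  have "poly (char_poly M) e = 0" unfolding cp ees by simp
  then have "eigenvalue M e" using eigenvalue_root_char_poly[OF M] by simp
  then obtain v where "eigenvector M v e" unfolding eigenvalue_def by auto
  then have v: "v \<in> carrier_vec (Suc m)" "v \<noteq> 0\<^sub>v (Suc m)" "M *\<^sub>v v = e \<cdot>\<^sub>v v"
    using M by (auto simp: eigenvector_def)
  have ce: "c \<le> Re e" using ev[OF v] .
  have npos: "0 < nsq v" using nsq_pos[OF v(1,2)] .
  define r where "r = complex_of_real (1 / sqrt (nsq v))"
  define u where "u = r \<cdot>\<^sub>v v"
  have uc: "u \<in> carrier_vec (Suc m)" using v by (simp add: u_def)
  have "u \<bullet>c u = r * cnj r * (v \<bullet>c v)"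
    using v by (simp add: u_def cip_smult1[of _ "Suc m"] cip_smult2[of _ "Suc m"])
  also have "\<dots> = complex_of_real ((1 / sqrt (nsq v)) * (1 / sqrt (nsq v)) * nsq v)"
    unfolding r_def cip_self complex_cnj_complex_of_real of_real_mult by (rule refl)
  also have "(1 / sqrt (nsq v)) * (1 / sqrt (nsq v)) * nsq v = 1" using npos by (simp add: field_simps)
  finally have uu: "u \<bullet>c u = 1" by simp
  have Mu: "M *\<^sub>v u = e \<cdot>\<^sub>v u"
    unfolding u_def mult_mat_vec[OF M v(1)] v(3) by (intro eq_vecI) auto
  obtain W where W: "W \<in> carrier_mat (Suc m) (Suc m)" and WW: "mat_adjoint W * W = 1\<^sub>m (Suc m)"
    and Wu: "col W 0 = u" using unit_complete[OF uc uu] by blast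
  define B where "B = mat (Suc m) m (\<lambda>(i,j). W $$ (i, Suc j))"
  note df = deflate[OF W WW Wu, folded B_def]
  have B: "B \<in> carrier_mat (Suc m) m" by (rule df(1))
  have BH: "mat_adjoint B \<in> carrier_mat m (Suc m)" using adj_carrier_mat[OF B] .
  define M' where "M' = mat_adjoint B * M * B"
  have M': "M' \<in> carrier_mat m m" using B M BH by (simp add: M'_def)
  have herm': "mat_adjoint M' = M'"
  proof -
    have "mat_adjoint M' = mat_adjoint B * mat_adjoint (mat_adjoint B * M)"
      unfolding M'_def by (rule adj_mult[OF mult_carrier_mat[OF BH M] B])
    also have "mat_adjoint (mat_adjoint B * M) = mat_adjoint M * B"
      using adj_mult[OF BH M] by simp
    finally show ?thesis using herm B BH M by (simp add: M'_def)
  qed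
  have uBy: "u \<bullet>c (B *\<^sub>v y) = 0" if y: "y \<in> carrier_vec m" for y
  proof -
    have "u \<bullet>c (B *\<^sub>v y) = (mat_adjoint B *\<^sub>v u) \<bullet>c y" using cip_adj[OF B uc y] by simp
    then show ?thesis using df(3) y by (simp add: cip)
  qed
  have M'y: "mat_adjoint B *\<^sub>v (M *\<^sub>v (B *\<^sub>v y)) = M' *\<^sub>v y" if y: "y \<in> carrier_vec m" for y
    unfolding M'_def assoc_mult_mat_vec[OF mult_carrier_mat[OF BH M] B y] assoc_mult_mat_vec[OF BH M mult_mat_vec_carrier[OF B y]] ..
  have ev': "c \<le> Re l" if y: "y \<in> carrier_vec m" "y \<noteq> 0\<^sub>v m" "M' *\<^sub>v y = l \<cdot>\<^sub>v y" for l y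
  proof -
    define z where "z = M *\<^sub>v (B *\<^sub>v y)"
    have Byc: "B *\<^sub>v y \<in> carrier_vec (Suc m)" using B y by simp
    have zc: "z \<in> carrier_vec (Suc m)" using M Byc by (simp add: z_def)
    have "z \<bullet>c u = (B *\<^sub>v y) \<bullet>c (M *\<^sub>v u)" unfolding z_def by (rule herm_sw[OF M herm Byc uc])
    also have "\<dots> = cnj e * ((B *\<^sub>v y) \<bullet>c u)" unfolding Mu by (rule cip_smult2[OF Byc uc])
    also have "(B *\<^sub>v y) \<bullet>c u = cnj (u \<bullet>c (B *\<^sub>v y))" by (rule cip_cnj) (use Byc uc B in simp)
    also have "u \<bullet>c (B *\<^sub>v y) = 0" by (rule uBy[OF y(1)])
    finally have zu: "z \<bullet>c u = 0" by simp
    have "z = (z \<bullet>c u) \<cdot>\<^sub>v u + B *\<^sub>v (mat_adjoint B *\<^sub>v z)" by (rule df(4)[OF zc])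
    also have "mat_adjoint B *\<^sub>v z = l \<cdot>\<^sub>v y" unfolding z_def M'y[OF y(1)] y(3) ..
    also have "B *\<^sub>v (l \<cdot>\<^sub>v y) = l \<cdot>\<^sub>v (B *\<^sub>v y)" by (rule mult_mat_vec[OF B y(1)])
    finally have zz: "z = l \<cdot>\<^sub>v (B *\<^sub>v y)" using zu uc Byc B by (intro eq_vecI) auto
    have Byn: "B *\<^sub>v y \<noteq> 0\<^sub>v (Suc m)"
    proof
      assume "B *\<^sub>v y = 0\<^sub>v (Suc m)"
      then have "mat_adjoint B *\<^sub>v (B *\<^sub>v y) = 0\<^sub>v m" using BH by (intro eq_vecI) (auto simp: mv_index[OF BH zero_carrier_vec])
      moreover have "mat_adjoint B *\<^sub>v (B *\<^sub>v y) = y" using df(2) B BH y(1)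
        by (simp flip: assoc_mult_mat_vec)
      ultimately show False using y(2) by simp
    qed
    show ?thesis using ev[OF Byc Byn] zz by (simp add: z_def)
  qed
  define a where "a = x \<bullet>c u"
  define y where "y = mat_adjoint B *\<^sub>v x"
  define p where "p = B *\<^sub>v y"
  have yc: "y \<in> carrier_vec m" using BH x by (simp add: y_def)
  have pc: "p \<in> carrier_vec (Suc m)" using B yc by (simp add: p_def)
  have auc: "a \<cdot>\<^sub>v u \<in> carrier_vec (Suc m)" using uc by simp
  have xd: "x = a \<cdot>\<^sub>v u + p" unfolding a_def p_def y_def by (rule df(4)[OF x])
  have Mxc: "M *\<^sub>v x \<in> carrier_vec (Suc m)" using M x by simp
  have Mpc: "M *\<^sub>v p \<in> carrier_vec (Suc m)" using M pc by simp
  have IH: "c * nsq y \<le> Re ((M' *\<^sub>v y) \<bullet>c y)" by (rule Suc.IH[OF M' herm' ev' yc])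
  have up: "u \<bullet>c p = 0" unfolding p_def by (rule uBy[OF yc])
  have t1: "(M *\<^sub>v x) \<bullet>c u = cnj e * a"
    using herm_sw[OF M herm x uc] cip_smult2[OF x uc, of e] Mu by (simp add: a_def)
  have t2: "u \<bullet>c (M *\<^sub>v p) = 0"
    using herm_sw[OF M herm uc pc] Mu cip_smult1[OF pc uc, of e] up by simp
  have t3: "p \<bullet>c (M *\<^sub>v p) = cnj ((M' *\<^sub>v y) \<bullet>c y)"
  proof -
    have "p \<bullet>c (M *\<^sub>v p) = cnj ((M *\<^sub>v p) \<bullet>c p)" by (rule cip_cnj) (use pc Mpc M in simp)
    also have "(M *\<^sub>v p) \<bullet>c p = (mat_adjoint B *\<^sub>v (M *\<^sub>v p)) \<bullet>c y"
      unfolding p_def using cip_adj[OF B _ yc, of "M *\<^sub>v (B *\<^sub>v y)"] Mpc by (simp add: p_def)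
    also have "mat_adjoint B *\<^sub>v (M *\<^sub>v p) = M' *\<^sub>v y" unfolding p_def by (rule M'y[OF yc])
    finally show ?thesis .
  qed
  have "(M *\<^sub>v x) \<bullet>c x = (M *\<^sub>v x) \<bullet>c (a \<cdot>\<^sub>v u) + (M *\<^sub>v x) \<bullet>c p"
    using cip_add2[OF Mxc auc pc] xd by simp
  also have "(M *\<^sub>v x) \<bullet>c (a \<cdot>\<^sub>v u) = cnj a * (cnj e * a)"
    using cip_smult2[OF Mxc uc] t1 by simp
  also have "(M *\<^sub>v x) \<bullet>c p = x \<bullet>c (M *\<^sub>v p)" by (rule herm_sw[OF M herm x pc])
  also have "\<dots> = (a \<cdot>\<^sub>v u) \<bullet>c (M *\<^sub>v p) + p \<bullet>c (M *\<^sub>v p)"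
    using cip_add1[OF Mpc auc pc] xd by simp
  also have "(a \<cdot>\<^sub>v u) \<bullet>c (M *\<^sub>v p) = 0" using cip_smult1[OF Mpc uc] t2 by simp
  finally have E1: "(M *\<^sub>v x) \<bullet>c x = cnj e * (a * cnj a) + cnj ((M' *\<^sub>v y) \<bullet>c y)"
    using t3 by (simp add: algebra_simps)
  have "x \<bullet>c x = x \<bullet>c (a \<cdot>\<^sub>v u) + x \<bullet>c p" using cip_add2[OF x auc pc] xd by simp
  also have "x \<bullet>c (a \<cdot>\<^sub>v u) = cnj a * a" using cip_smult2[OF x uc] by (simp add: a_def)
  also have "x \<bullet>c p = (mat_adjoint B *\<^sub>v x) \<bullet>c y" unfolding p_def using cip_adj[OF B x yc] by simp
  finally have E2: "x \<bullet>c x = a * cnj a + y \<bullet>c y" unfolding y_def[symmetric] by (simp add: mult.commute)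
  have na: "a * cnj a = complex_of_real ((cmod a)\<^sup>2)" by (rule complex_norm_square[symmetric])
  have N: "nsq x = (cmod a)\<^sup>2 + nsq y"
    using E2 unfolding na cip_self by (metis of_real_add of_real_eq_iff)
  have R: "Re ((M *\<^sub>v x) \<bullet>c x) = Re e * (cmod a)\<^sup>2 + Re ((M' *\<^sub>v y) \<bullet>c y)"
    unfolding E1 na by simp
  have "c * (cmod a)\<^sup>2 \<le> Re e * (cmod a)\<^sup>2" using ce by (simp add: mult_right_mono)
  then show ?case unfolding N R using IH by (simp add: algebra_simps)
qed

lemma lin_unique_mset:
  fixes A B :: "'a::idom multiset"
  shows "(\<Prod>a\<in>#A. [:-a,1:]) = (\<Prod>b\<in>#B. [:-b,1:]) \<Longrightarrow> A = B"
proof (induction A arbitrary: B)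
  case empty
  show ?case
  proof (rule ccontr)
    assume "{#} \<noteq> B"
    then obtain b where b: "b \<in># B" by (metis multiset_nonemptyE)
    have "0 \<in># image_mset (\<lambda>x. poly [:-x,1:] b) B"
      unfolding in_image_mset by (rule rev_image_eqI[of b]) (use b in auto)
    then have "poly (\<Prod>b\<in>#B. [:-b,1:]) b = 0" by (simp add: poly_prod_mset)
    then show False using empty.prems[symmetric] by simp
  qed
next
  case (add a A)
  have "poly (\<Prod>b\<in>#B. [:-b,1:]) a = 0" using add.prems[symmetric] by simp
  then have "0 \<in># image_mset (\<lambda>x. poly [:-x,1:] a) B" by (simp add: poly_prod_mset)
  then obtain b where b: "b \<in># B" "poly [:-b,1:] a = 0" unfolding in_image_mset by auto
  then have aB: "a \<in># B" by simp
  then have BB: "B = add_mset a (B - {#a#})" by simp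
  have eq: "[:-a,1:] * (\<Prod>x\<in>#A. [:-x,1:]) = [:-a,1:] * (\<Prod>x\<in>#B - {#a#}. [:-x,1:])"
    using add.prems by (subst (asm) BB) simp
  have nz: "[:-a,1:] \<noteq> (0::'a poly)" by simp
  have "(\<Prod>x\<in>#A. [:-x,1:]) = (\<Prod>x\<in>#B - {#a#}. [:-x,1:])"
    by (rule mult_left_cancel[OF nz, THEN iffD1, OF eq])
  then have "A = B - {#a#}" by (rule add.IH)
  then show ?case using BB by simp
qed

lemma lin_unique_list:
  fixes as bs :: "'a::idom list"
  assumes "(\<Prod>a\<leftarrow>as. [:-a,1:]) = (\<Prod>b\<leftarrow>bs. [:-b,1:])"
  shows "mset as = mset bs"
  by (rule lin_unique_mset) (use assms in \<open>simp only: prod_mset_prod_list[symmetric] mset_map\<close>)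

lemma eig_AHA:
  fixes A :: "complex mat"
  assumes A: "A \<in> carrier_mat k n" and v: "v \<in> carrier_vec n" "v \<noteq> 0\<^sub>v n"
    and ev: "(mat_adjoint A * A) *\<^sub>v v = e \<cdot>\<^sub>v v"
  shows "e = complex_of_real (Re e) \<and> 0 \<le> Re e"
proof -
  have Av: "A *\<^sub>v v \<in> carrier_vec k" using A v by simp
  have "((mat_adjoint A * A) *\<^sub>v v) \<bullet>c v = (mat_adjoint A *\<^sub>v (A *\<^sub>v v)) \<bullet>c v"
    using A v adj_carrier_mat[OF A] by simp
  also have "\<dots> = (A *\<^sub>v v) \<bullet>c (A *\<^sub>v v)" by (rule cip_adj[OF A Av v(1)])
  finally have "e * complex_of_real (nsq v) = complex_of_real (nsq (A *\<^sub>v v))"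
    unfolding ev cip_smult1[OF v(1) v(1)] cip_self .
  moreover have "0 < nsq v" by (rule nsq_pos[OF v])
  ultimately have "e = complex_of_real (nsq (A *\<^sub>v v) / nsq v)"
    by (simp add: field_simps)
  then show ?thesis using nsq_nonneg[of "A *\<^sub>v v"] nsq_nonneg[of v] by simp
qed

definition svP :: "complex mat \<Rightarrow> real list \<Rightarrow> bool" where
  "svP A s \<longleftrightarrow> length s = dim_col A \<and> sorted_wrt (\<ge>) s \<and> (\<forall>x\<in>set s. x \<ge> 0) \<and>
      char_poly (mat_adjoint A * A) = (\<Prod>x\<leftarrow>s. [:- complex_of_real (x\<^sup>2), 1:])"

lemma svP_unique:
  assumes "svP A s1" "svP A s2" shows "s1 = s2"
proof -
  define h where "h x = complex_of_real (x\<^sup>2)" for x :: real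
  have p: "(\<Prod>x\<leftarrow>s. [:- complex_of_real (x\<^sup>2), 1:]) = (\<Prod>a\<leftarrow>map h s. [:-a,1:])" for s
    by (induction s) (simp_all add: h_def)
  have "mset (map h s1) = mset (map h s2)"
  proof (rule lin_unique_list)
    have c1: "char_poly (mat_adjoint A * A) = (\<Prod>a\<leftarrow>map h s1. [:-a,1:])"
      using assms(1) unfolding svP_def p by blast
    have c2: "char_poly (mat_adjoint A * A) = (\<Prod>a\<leftarrow>map h s2. [:-a,1:])"
      using assms(2) unfolding svP_def p by blast
    show "(\<Prod>a\<leftarrow>map h s1. [:-a,1:]) = (\<Prod>a\<leftarrow>map h s2. [:-a,1:])" using c1 c2 by simp
  qed
  then have "image_mset (\<lambda>z. sqrt (Re z)) (mset (map h s1)) = image_mset (\<lambda>z. sqrt (Re z)) (mset (map h s2))"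
    by simp
  moreover have "image_mset (\<lambda>z. sqrt (Re z)) (mset (map h s)) = mset s" if "\<forall>x\<in>set s. x \<ge> 0" for s
  proof -
    have "image_mset (\<lambda>z. sqrt (Re z)) (mset (map h s)) = image_mset (\<lambda>x. x) (mset s)"
      unfolding mset_map multiset.map_comp by (rule image_mset_cong) (use that in \<open>auto simp: h_def\<close>)
    then show ?thesis by simp
  qed
  ultimately have m: "mset s1 = mset s2" using assms unfolding svP_def by auto
  have "sorted (rev s1)" "sorted (rev s2)" using assms by (auto simp: svP_def sorted_wrt_rev)
  then have "sort (rev s2) = rev s1" "sort (rev s2) = rev s2"
    using m by (auto intro!: properties_for_sort)
  then show ?thesis by simp
qed

lemma svP_exists:
  fixes A :: "complex mat"
  assumes A: "A \<in> carrier_mat k n"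
  shows "\<exists>s. svP A s"
proof -
  define M where "M = mat_adjoint A * A"
  have M: "M \<in> carrier_mat n n" using A adj_carrier_mat[OF A] by (simp add: M_def)
  obtain es where cp: "char_poly M = (\<Prod>a\<leftarrow>es. [:- a, 1:])" and les: "length es = n"
    using char_poly_factorized[OF M] by blast
  have re: "e = complex_of_real (Re e) \<and> 0 \<le> Re e" if e: "e \<in> set es" for e
  proof -
    have "poly (char_poly M) e = 0" unfolding cp poly_prod_list prod_list_zero_iff
      using e by auto
    then have "eigenvalue M e" using eigenvalue_root_char_poly[OF M] by simp
    then obtain v where "eigenvector M v e" unfolding eigenvalue_def by auto
    then have v: "v \<in> carrier_vec n" "v \<noteq> 0\<^sub>v n" "M *\<^sub>v v = e \<cdot>\<^sub>v v"
      using M by (auto simp: eigenvector_def)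
    show ?thesis by (rule eig_AHA[OF A v(1,2) v(3)[unfolded M_def]])
  qed
  define g where "g e = sqrt (Re e)" for e :: complex
  define s where "s = rev (sort (map g es))"
  have "length s = dim_col A" using les A by (simp add: s_def)
  moreover have "sorted_wrt (\<ge>) s" by (simp add: s_def sorted_wrt_rev)
  moreover have "\<forall>x\<in>set s. x \<ge> 0"
  proof
    fix x assume "x \<in> set s"
    then obtain e where e: "e \<in> set es" "x = g e" by (auto simp: s_def)
    show "x \<ge> 0" using re[OF e(1), THEN conjunct2] e(2) by (simp add: g_def)
  qed
  moreover have "char_poly (mat_adjoint A * A) = (\<Prod>x\<leftarrow>s. [:- complex_of_real (x\<^sup>2), 1:])"
  proof -
    have "(\<Prod>x\<leftarrow>s. [:- complex_of_real (x\<^sup>2), 1:]) = (\<Prod>x\<in>#mset s. [:- complex_of_real (x\<^sup>2), 1:])"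
      by (simp only: prod_mset_prod_list[symmetric] mset_map)
    also have "mset s = image_mset g (mset es)" by (simp add: s_def)
    also have "(\<Prod>x\<in>#image_mset g (mset es). [:- complex_of_real (x\<^sup>2), 1:]) = (\<Prod>e\<in>#mset es. [:- e, 1:])"
      unfolding multiset.map_comp
    proof (rule arg_cong[where f = prod_mset], rule image_mset_cong)
      fix e assume "e \<in># mset es"
      then have "e \<in> set es" by simp
      note r = re[OF this]
      have gg: "(g e)\<^sup>2 = Re e" using r by (simp add: g_def)
      have "complex_of_real ((g e)\<^sup>2) = e" unfolding gg by (rule r[THEN conjunct1, symmetric])
      then show "((\<lambda>x. [:- complex_of_real (x\<^sup>2), 1:]) \<circ> g) e = [:- e, 1:]" by simp
    qed
    also have "\<dots> = char_poly (mat_adjoint A * A)" unfolding M_def[symmetric] cp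
      by (simp only: prod_mset_prod_list[symmetric] mset_map)
    finally show ?thesis by simp
  qed
  ultimately show ?thesis unfolding svP_def by blast
qed

lemma sing_vals_svP: "A \<in> carrier_mat k n \<Longrightarrow> svP A (sing_vals A)"
  unfolding sing_vals_def svP_def[symmetric]
  by (rule theI', metis svP_exists svP_unique)

lemma sigma_bound:
  fixes A :: "complex mat"
  assumes A: "A \<in> carrier_mat k n" and n: "0 < n" and y: "y \<in> carrier_vec n"
  shows "(sigma n A)\<^sup>2 * nsq y \<le> nsq (A *\<^sub>v y)"
proof -
  define s where "s = sing_vals A"
  have sv: "svP A s" unfolding s_def by (rule sing_vals_svP[OF A])
  have ls: "length s = n" and so: "sorted_wrt (\<ge>) s" and nn: "\<forall>x\<in>set s. x \<ge> 0"
    and cp: "char_poly (mat_adjoint A * A) = (\<Prod>x\<leftarrow>s. [:- complex_of_real (x\<^sup>2), 1:])"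
    using sv A unfolding svP_def by auto
  define M where "M = mat_adjoint A * A"
  have AH: "mat_adjoint A \<in> carrier_mat n k" by (rule adj_carrier_mat[OF A])
  have M: "M \<in> carrier_mat n n" using A AH by (simp add: M_def)
  have herm: "mat_adjoint M = M" unfolding M_def using adj_mult[OF AH A] by simp
  have sig: "sigma n A = s ! (n - 1)" by (simp add: sigma_def s_def)
  have ev: "(s ! (n - 1))\<^sup>2 \<le> Re e"
    if v: "v \<in> carrier_vec n" "v \<noteq> 0\<^sub>v n" "M *\<^sub>v v = e \<cdot>\<^sub>v v" for v e
  proof -
    have "eigenvector M v e" using v M by (simp add: eigenvector_def)
    then have "eigenvalue M e" unfolding eigenvalue_def by blast
    then have "poly (char_poly M) e = 0" using eigenvalue_root_char_poly[OF M] by simp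
    then have "0 \<in> set (map (\<lambda>x. poly [:- complex_of_real (x\<^sup>2), 1:] e) s)"
      unfolding M_def cp poly_prod_list prod_list_zero_iff by (simp add: comp_def)
    then obtain x where x: "x \<in> set s" "poly [:- complex_of_real (x\<^sup>2), 1:] e = 0" by auto
    then have ex: "e = complex_of_real (x\<^sup>2)" by simp
    obtain j where j: "j < n" "x = s ! j" using x(1) ls by (auto simp: in_set_conv_nth)
    have "s ! (n - 1) \<le> x"
    proof (cases "j = n - 1")
      case True then show ?thesis using j by simp
    next
      case False
      then have "j < n - 1" using j by simp
      from sorted_wrt_nth_less[OF so this] show ?thesis using n ls j by simp
    qed
    moreover have "0 \<le> s ! (n - 1)" using nn ls n by simp
    ultimately have "(s ! (n - 1))\<^sup>2 \<le> x\<^sup>2" by (simp add: power_mono)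
    then show ?thesis using ex by simp
  qed
  have "(s ! (n - 1))\<^sup>2 * nsq y \<le> Re ((M *\<^sub>v y) \<bullet>c y)" by (rule rayleigh[OF M herm ev y])
  also have "(M *\<^sub>v y) \<bullet>c y = (mat_adjoint A *\<^sub>v (A *\<^sub>v y)) \<bullet>c y" using A AH y by (simp add: M_def)
  also have "\<dots> = (A *\<^sub>v y) \<bullet>c (A *\<^sub>v y)" by (rule cip_adj[OF A _ y]) (use A y in simp)
  also have "\<dots> = complex_of_real (nsq (A *\<^sub>v y))" by (rule cip_self)
  finally show ?thesis unfolding sig by simp
qed

lemma fro_cols: "Y \<in> carrier_mat p q \<Longrightarrow> fro_sq Y = (\<Sum>j<q. nsq (col Y j))"
  unfolding fro_sq_def nsq_def by (subst sum.swap) (auto intro!: sum.cong)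

lemma fro_adj: "Y \<in> carrier_mat p q \<Longrightarrow> fro_sq (mat_adjoint Y) = fro_sq Y"
  unfolding fro_sq_def by (subst sum.swap) (auto intro!: sum.cong)

lemma fro_mult_ge:
  fixes A Y :: "complex mat"
  assumes A: "A \<in> carrier_mat p k" and Y: "Y \<in> carrier_mat k q"
    and h: "\<And>y. y \<in> carrier_vec k \<Longrightarrow> c * nsq y \<le> nsq (A *\<^sub>v y)"
  shows "c * fro_sq Y \<le> fro_sq (A * Y)"
proof -
  have "c * fro_sq Y = (\<Sum>j<q. c * nsq (col Y j))" using Y by (simp add: fro_cols sum_distrib_left)
  also have "\<dots> \<le> (\<Sum>j<q. nsq (A *\<^sub>v col Y j))" by (rule sum_mono, rule h) (use Y in auto)
  also have "\<dots> = (\<Sum>j<q. nsq (col (A * Y) j))"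
  proof (rule sum.cong[OF refl])
    fix j assume "j \<in> {..<q}"
    then show "nsq (A *\<^sub>v col Y j) = nsq (col (A * Y) j)" using col_mult2[OF A Y, of j] by simp
  qed
  also have "\<dots> = fro_sq (A * Y)" by (rule fro_cols[symmetric, of _ p]) (use A Y in simp)
  finally show ?thesis .
qed

lemma nsq_unitary:
  fixes U :: "complex mat"
  assumes U: "U \<in> carrier_mat p k" and UU: "mat_adjoint U * U = 1\<^sub>m k" and y: "y \<in> carrier_vec k"
  shows "nsq (U *\<^sub>v y) = nsq y"
proof -
  have UH: "mat_adjoint U \<in> carrier_mat k p" by (rule adj_carrier_mat[OF U])
  have "complex_of_real (nsq (U *\<^sub>v y)) = (U *\<^sub>v y) \<bullet>c (U *\<^sub>v y)" by (rule cip_self[symmetric])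
  also have "\<dots> = (mat_adjoint U *\<^sub>v (U *\<^sub>v y)) \<bullet>c y" by (rule cip_adj[symmetric, OF U _ y]) (use U y in simp)
  also have "mat_adjoint U *\<^sub>v (U *\<^sub>v y) = y" using UU U UH y by (simp flip: assoc_mult_mat_vec)
  finally show ?thesis by (simp add: cip_self)
qed

lemma fro_unitary:
  fixes U Y :: "complex mat"
  assumes U: "U \<in> carrier_mat p k" and UU: "mat_adjoint U * U = 1\<^sub>m k" and Y: "Y \<in> carrier_mat k q"
  shows "fro_sq (U * Y) = fro_sq Y"
proof -
  have "fro_sq (U * Y) = (\<Sum>j<q. nsq (col (U * Y) j))" by (rule fro_cols[of _ p]) (use U Y in simp)
  also have "\<dots> = (\<Sum>j<q. nsq (U *\<^sub>v col Y j))"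
  proof (rule sum.cong[OF refl])
    fix j assume "j \<in> {..<q}"
    then show "nsq (col (U * Y) j) = nsq (U *\<^sub>v col Y j)" using col_mult2[OF U Y, of j] by simp
  qed
  also have "\<dots> = (\<Sum>j<q. nsq (col Y j))" using nsq_unitary[OF U UU] Y by auto
  also have "\<dots> = fro_sq Y" using Y by (simp add: fro_cols)
  finally show ?thesis .
qed

lemma tr_fro:
  fixes H :: "complex mat"
  assumes H: "H \<in> carrier_mat p q"
  shows "mtrace (mat_adjoint H * H) = complex_of_real (fro_sq H)"
proof -
  have "mtrace (mat_adjoint H * H) = (\<Sum>i<q. \<Sum>k<p. cnj (H $$ (k,i)) * H $$ (k,i))"
    unfolding mtrace_def using H by (auto simp: scalar_prod_def atLeast0LessThan intro!: sum.cong)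
  also have "\<dots> = (\<Sum>i<q. \<Sum>k<p. complex_of_real ((cmod (H $$ (k,i)))\<^sup>2))"
    by (simp only: complex_norm_square mult.commute)
  also have "\<dots> = complex_of_real (fro_sq H)"
    unfolding fro_sq_def of_real_sum using H by (subst sum.swap) simp
  finally show ?thesis .
qed

lemma fro_nonneg: "0 \<le> fro_sq H"
  unfolding fro_sq_def by (auto intro!: sum_nonneg)

lemma fro_zero:
  assumes H: "H \<in> carrier_mat p q" and z: "fro_sq H = 0"
  shows "H = 0\<^sub>m p q"
proof (rule eq_matI)
  fix i j assume "i < dim_row (0\<^sub>m p q :: complex mat)" "j < dim_col (0\<^sub>m p q :: complex mat)"
  then have i: "i < p" and j: "j < q" by auto
  have "(\<Sum>j<q. (cmod (H $$ (i,j)))\<^sup>2) = 0"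
    using z H i unfolding fro_sq_def by (subst (asm) sum_nonneg_eq_0_iff) (auto intro!: sum_nonneg)
  then have "(cmod (H $$ (i,j)))\<^sup>2 = 0" using j by (subst (asm) sum_nonneg_eq_0_iff) auto
  then show "H $$ (i,j) = 0\<^sub>m p q $$ (i,j)" using i j by simp
qed (use H in auto)

theorem lemma3:
  fixes Nr Nt L m k :: nat
    and h :: "nat \<Rightarrow> complex" and \<theta>r \<theta>t :: "nat \<Rightarrow> real"
    and H U V Uh Vh W F YS Qh :: "complex mat"
  assumes "0 < L" and "L \<le> Nr" and "L \<le> Nt"
    and "\<forall>l<L. - (pi/2) \<le> \<theta>r l \<and> \<theta>r l < pi/2 \<and> - (pi/2) \<le> \<theta>t l \<and> \<theta>t l < pi/2"
    and "H = channel Nr Nt L h \<theta>r \<theta>t"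
    and "H \<noteq> 0\<^sub>m Nr Nt"
    \<comment> \<open>compact SVD of H with the L dominant singular triplets\<close>
    and "U \<in> carrier_mat Nr L" and "V \<in> carrier_mat Nt L"
    and "mat_adjoint U * U = 1\<^sub>m L" and "mat_adjoint V * V = 1\<^sub>m L"
    and "H = U * mat L L (\<lambda>(i,j). if i = j then complex_of_real (sigma (i+1) H) else 0) * mat_adjoint V"
    \<comment> \<open>estimated subspaces from the two-stage procedure\<close>
    and "YS \<in> carrier_mat Nr m" and "L \<le> m" and "m \<le> Nt"
    and "dominant_left_sv L YS Uh"
    and "Qh \<in> carrier_mat k Nt" and "L \<le> k"
    and "dominant_right_sv L Qh Vh"
    and "W = Uh" and "F = Vh"
  shows "eta H W F \<ge> (sigma L (mat_adjoint Uh * U))\<^sup>2 * (sigma L (mat_adjoint Vh * V))\<^sup>2"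
proof -
  note L0 = assms(1) and Hne = assms(6) and U = assms(7) and V = assms(8)
    and UU = assms(9) and VV = assms(10) and Hdef = assms(11)
  obtain P1 Q1 where P1: "unitary (dim_row YS) P1" and Uh: "Uh = first_cols L P1"
    using assms(15) unfolding dominant_left_sv_def by blast
  obtain P2 Q2 where Q2: "unitary (dim_col Qh) Q2" and Vh: "Vh = first_cols L Q2"
    using assms(18) unfolding dominant_right_sv_def by blast
  have P1c: "P1 \<in> carrier_mat Nr Nr" using P1 assms(12) by (simp add: unitary_def)
  have Q2c: "Q2 \<in> carrier_mat Nt Nt" using Q2 assms(16) by (simp add: unitary_def)
  have Uhc: "Uh \<in> carrier_mat Nr L" using P1c by (simp add: Uh first_cols_def)
  have Vhc: "Vh \<in> carrier_mat Nt L" using Q2c by (simp add: Vh first_cols_def)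
  define D where "D = mat L L (\<lambda>(i,j). if i = j then complex_of_real (sigma (i+1) H) else 0)"
  have Dc: "D \<in> carrier_mat L L" by (simp add: D_def)
  have Hd: "H = U * D * mat_adjoint V" using Hdef by (simp add: D_def)
  have UHc: "mat_adjoint U \<in> carrier_mat L Nr" by (rule adj_carrier_mat[OF U])
  have VHc: "mat_adjoint V \<in> carrier_mat L Nt" by (rule adj_carrier_mat[OF V])
  have UhHc: "mat_adjoint Uh \<in> carrier_mat L Nr" by (rule adj_carrier_mat[OF Uhc])
  have VhHc: "mat_adjoint Vh \<in> carrier_mat L Nt" by (rule adj_carrier_mat[OF Vhc])
  have DHc: "mat_adjoint D \<in> carrier_mat L L" by (rule adj_carrier_mat[OF Dc])
  have Hc: "H \<in> carrier_mat Nr Nt" using U Dc VHc by (simp add: Hd)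
  define A where "A = mat_adjoint Uh * U"
  define B where "B = mat_adjoint Vh * V"
  have Ac: "A \<in> carrier_mat L L" using UhHc U by (simp add: A_def)
  have Bc: "B \<in> carrier_mat L L" using VhHc V by (simp add: B_def)
  have BH: "mat_adjoint B = mat_adjoint V * Vh" unfolding B_def using adj_mult[OF VhHc V] by simp
  have BHc: "mat_adjoint B \<in> carrier_mat L L" by (rule adj_carrier_mat[OF Bc])
  have X: "mat_adjoint W * H * F = A * (D * mat_adjoint B)"
  proof -
    have dv: "D * mat_adjoint V \<in> carrier_mat L Nt" using Dc VHc by simp
    have au: "mat_adjoint Uh * U \<in> carrier_mat L L" using UhHc U by simp
    have "mat_adjoint Uh * (U * D * mat_adjoint V) * Vh = mat_adjoint Uh * (U * (D * mat_adjoint V)) * Vh"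
      using assoc_mult_mat[OF U Dc VHc] by simp
    also have "mat_adjoint Uh * (U * (D * mat_adjoint V)) = (mat_adjoint Uh * U) * (D * mat_adjoint V)"
      using assoc_mult_mat[OF UhHc U dv] by simp
    also have "(mat_adjoint Uh * U) * (D * mat_adjoint V) * Vh = (mat_adjoint Uh * U) * ((D * mat_adjoint V) * Vh)"
      using assoc_mult_mat[OF au dv Vhc] by simp
    also have "(D * mat_adjoint V) * Vh = D * (mat_adjoint V * Vh)"
      using assoc_mult_mat[OF Dc VHc Vhc] by simp
    finally show ?thesis unfolding assms(19,20) Hd A_def BH .
  qed
  define sa where "sa = sigma L A"
  define sb where "sb = sigma L B"
  have DBc: "D * mat_adjoint B \<in> carrier_mat L L" using Dc BHc by simp
  have s1: "sa\<^sup>2 * fro_sq (D * mat_adjoint B) \<le> fro_sq (A * (D * mat_adjoint B))"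
    by (rule fro_mult_ge[OF Ac DBc]) (unfold sa_def, rule sigma_bound[OF Ac L0])
  have "fro_sq (D * mat_adjoint B) = fro_sq (mat_adjoint (D * mat_adjoint B))"
    by (rule fro_adj[symmetric, OF DBc])
  also have "mat_adjoint (D * mat_adjoint B) = B * mat_adjoint D" using adj_mult[OF Dc BHc] by simp
  finally have e1: "fro_sq (D * mat_adjoint B) = fro_sq (B * mat_adjoint D)" .
  have s2: "sb\<^sup>2 * fro_sq (mat_adjoint D) \<le> fro_sq (B * mat_adjoint D)"
    by (rule fro_mult_ge[OF Bc DHc]) (unfold sb_def, rule sigma_bound[OF Bc L0])
  have fD: "fro_sq (mat_adjoint D) = fro_sq D" by (rule fro_adj[OF Dc])
  have fH: "fro_sq H = fro_sq D"
  proof -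
    have DVc: "D * mat_adjoint V \<in> carrier_mat L Nt" using Dc VHc by simp
    have "fro_sq H = fro_sq (U * (D * mat_adjoint V))" using U Dc VHc by (simp add: Hd)
    also have "\<dots> = fro_sq (D * mat_adjoint V)" by (rule fro_unitary[OF U UU DVc])
    also have "\<dots> = fro_sq (mat_adjoint (D * mat_adjoint V))" by (rule fro_adj[symmetric, OF DVc])
    also have "mat_adjoint (D * mat_adjoint V) = V * mat_adjoint D" using adj_mult[OF Dc VHc] by simp
    also have "fro_sq (V * mat_adjoint D) = fro_sq (mat_adjoint D)" by (rule fro_unitary[OF V VV DHc])
    finally show ?thesis using fD by simp
  qed
  have tr: "Re (mtrace (mat_adjoint H * H)) = fro_sq H" using tr_fro[OF Hc] by simp
  have Hpos: "0 < fro_sq H"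
  proof -
    have "fro_sq H \<noteq> 0" using fro_zero[OF Hc] Hne by blast
    then show ?thesis using fro_nonneg[of H] by simp
  qed
  have sa0: "0 \<le> sa\<^sup>2" by simp
  have "sa\<^sup>2 * sb\<^sup>2 * fro_sq H = sa\<^sup>2 * (sb\<^sup>2 * fro_sq (mat_adjoint D))" using fH fD by simp
  also have "\<dots> \<le> sa\<^sup>2 * fro_sq (D * mat_adjoint B)" using s2 e1 sa0 by (simp add: mult_left_mono)
  also have "\<dots> \<le> fro_sq (mat_adjoint W * H * F)" using s1 X by simp
  finally have main: "sa\<^sup>2 * sb\<^sup>2 * fro_sq H \<le> fro_sq (mat_adjoint W * H * F)" .
  have "eta H W F = fro_sq (mat_adjoint W * H * F) / fro_sq H" unfolding eta_def tr ..
  then show ?thesis using main Hpos unfolding sa_def sb_def A_def B_def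
    by (simp add: pos_le_divide_eq)
qed

end
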